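(* $u(4,8)=3$ and $\varepsilon(4,8)=4$.
   Context: All matrices are binary. For a nonempty set $S$ of columns of a binary matrix, let $z$ be the sum over the integers of the columns in $S$. $S$ is called $1$-free if no entry of $z$ equals $1$, and even if all entries of $z$ are even. For a binary $m\times n$ matrix $A$ with $m<n$: $\varepsilon(A)$ is the smallest cardinality of a nonempty even set of columns, and $u(A)$ the smallest cardinality of a nonempty $1$-free set of columns. For $m<n$, $\varepsilon(m,n)$ and $u(m,n)$ are the maxima of $\varepsilon(A)$, resp. $u(A)$, over all binary $m\times n$ matrices. *)

theory Defs
  imports Main
begin

text \<open>A binary m x n matrix is represented as A :: nat => nat => bool, where only the
entries A i j with i < m and j < n matter (True = 1, False = 0).  Columns are
indexed by {..<n}, rows by {..<m}.\<close>

definition colsum :: "(nat \<Rightarrow> nat \<Rightarrow> bool) \<Rightarrow> nat set \<Rightarrow> nat \<Rightarrow> nat" where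
  "colsum A S i = (\<Sum>j\<in>S. of_bool (A i j))"

definition one_free :: "nat \<Rightarrow> (nat \<Rightarrow> nat \<Rightarrow> bool) \<Rightarrow> nat set \<Rightarrow> bool" where
  "one_free m A S \<longleftrightarrow> (\<forall>i<m. colsum A S i \<noteq> 1)"

definition even_set :: "nat \<Rightarrow> (nat \<Rightarrow> nat \<Rightarrow> bool) \<Rightarrow> nat set \<Rightarrow> bool" where
  "even_set m A S \<longleftrightarrow> (\<forall>i<m. even (colsum A S i))"

definition eps_mat :: "nat \<Rightarrow> nat \<Rightarrow> (nat \<Rightarrow> nat \<Rightarrow> bool) \<Rightarrow> nat" where
  "eps_mat m n A = Min {card S | S. S \<subseteq> {..<n} \<and> S \<noteq> {} \<and> even_set m A S}"

definition u_mat :: "nat \<Rightarrow> nat \<Rightarrow> (nat \<Rightarrow> nat \<Rightarrow> bool) \<Rightarrow> nat" where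
  "u_mat m n A = Min {card S | S. S \<subseteq> {..<n} \<and> S \<noteq> {} \<and> one_free m A S}"

definition eps_max :: "nat \<Rightarrow> nat \<Rightarrow> nat" where
  "eps_max m n = Max {eps_mat m n A | A. True}"

definition u_max :: "nat \<Rightarrow> nat \<Rightarrow> nat" where
  "u_max m n = Max {u_mat m n A | A. True}"

end

theory Submission imports Defs begin

type_synonym v4 = "bool \<times> bool \<times> bool \<times> bool"

definition nx1 :: "bool \<Rightarrow> bool \<Rightarrow> bool \<Rightarrow> bool" where
 "nx1 a b c = (if a then b \<or> c else (b = c))"
fun ok3 :: "v4 \<Rightarrow> v4 \<Rightarrow> v4 \<Rightarrow> bool" where
 "ok3 (a0,a1,a2,a3) (b0,b1,b2,b3) (c0,c1,c2,c3) = (nx1 a0 b0 c0 \<and> nx1 a1 b1 c1 \<and> nx1 a2 b2 c2 \<and> nx1 a3 b3 c3)"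
fun xv :: "v4 \<Rightarrow> v4 \<Rightarrow> v4" where
 "xv (a0,a1,a2,a3) (b0,b1,b2,b3) = (a0 \<noteq> b0, a1 \<noteq> b1, a2 \<noteq> b2, a3 \<noteq> b3)"

fun pairs :: "'a list \<Rightarrow> ('a \<times> 'a) list" where
 "pairs [] = []" | "pairs (x#xs) = map (Pair x) xs @ pairs xs"
fun triples :: "'a list \<Rightarrow> ('a \<times> 'a \<times> 'a) list" where
 "triples [] = []" | "triples (x#xs) = map (\<lambda>(a,b). (x,a,b)) (pairs xs) @ triples xs"

lemma pairs_mem: "(a,b) \<in> set (pairs xs) \<Longrightarrow> distinct xs \<Longrightarrow> a \<in> set xs \<and> b \<in> set xs \<and> a \<noteq> b"
  by (induction xs) auto

lemma triples_mem: "(a,b,c) \<in> set (triples xs) \<Longrightarrow> distinct xs \<Longrightarrow> distinct [a,b,c] \<and> a \<in> set xs \<and> b \<in> set xs \<and> c \<in> set xs"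
  by (induction xs) (auto dest: pairs_mem)

fun srch :: "('a list \<Rightarrow> 'a \<Rightarrow> bool) \<Rightarrow> 'a list \<Rightarrow> 'a list \<Rightarrow> nat \<Rightarrow> bool" where
 "srch ng xs cs 0 = False"
| "srch ng xs [] (Suc d) = True"
| "srch ng xs (c#cs) (Suc d) = ((ng xs c \<or> srch ng (c#xs) cs d) \<and> srch ng xs cs (Suc d))"

lemma srch_sound:
  assumes mono: "\<And>U W. G U \<Longrightarrow> U \<subseteq> W \<Longrightarrow> G W"
  shows "srch ng xs cs d \<Longrightarrow> (\<forall>xs c. distinct xs \<longrightarrow> c \<notin> set xs \<longrightarrow> ng xs c \<longrightarrow> G (insert c (set xs))) \<Longrightarrow> distinct xs \<Longrightarrow> distinct cs \<Longrightarrow> set xs \<inter> set cs = {}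
     \<Longrightarrow> Y \<subseteq> set cs \<Longrightarrow> card Y = d \<Longrightarrow> G (set xs \<union> Y)"
proof (induction ng xs cs d arbitrary: Y rule: srch.induct)
  case (1 ng xs cs)
  then show ?case by simp
next
  case (2 ng xs d)
  then show ?case by simp
next
  case (3 ng' xs c cs d)
  have cx: "c \<notin> set xs" using "3.prems" by auto
  show ?case
  proof (cases "c \<in> Y")
    case True
    from "3.prems"(1) have "ng' xs c \<or> srch ng' (c#xs) cs d" by simp
    then show ?thesis
    proof
      assume h: "ng' xs c"
      have "G (insert c (set xs))" using "3.prems"(2,3) h cx by simp
      then show ?thesis using mono True by blast
    next
      assume h: "srch ng' (c#xs) cs d"
      have Y1: "Y - {c} \<subseteq> set cs" using "3.prems" by auto
      have fY: "finite Y" using "3.prems"(6) finite_subset by blast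
      have Y2: "card (Y - {c}) = d" using "3.prems"(7) True fY by simp
      have "G (set (c#xs) \<union> (Y - {c}))"
        using "3.IH"(1)[OF h _ _ _ _ Y1 Y2] "3.prems"(2-5) cx by auto
      moreover have "set (c#xs) \<union> (Y - {c}) = set xs \<union> Y" using True by auto
      ultimately show ?thesis by simp
    qed
  next
    case False
    have h: "srch ng' xs cs (Suc d)" using "3.prems"(1) by simp
    have Y1: "Y \<subseteq> set cs" using "3.prems" False by auto
    show ?thesis using "3.IH"(2)[OF h _ _ _ _ Y1] "3.prems"(2-5,7) by auto
  qed
qed


definition cands :: "v4 list" where
 "cands = [(False,False,False,True),(False,False,True,False),(False,False,True,True),
  (False,True,False,False),(False,True,False,True),(False,True,True,False),(False,True,True,True),
  (True,False,False,False),(True,False,False,True),(True,False,True,False),(True,False,True,True),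
  (True,True,False,False),(True,True,False,True),(True,True,True,False),(True,True,True,True)]"

definition ngU :: "v4 list \<Rightarrow> v4 \<Rightarrow> bool" where
 "ngU xs c = list_ex (\<lambda>(a,b). ok3 a b c) (pairs xs)"
definition ngE :: "v4 list \<Rightarrow> v4 \<Rightarrow> bool" where
 "ngE xs c = (list_ex (\<lambda>(a,b). xv a b = c) (pairs xs) \<or> list_ex (\<lambda>(a,b,e). xv a (xv b e) = c) (triples xs))"

definition goodU :: "v4 set \<Rightarrow> bool" where
 "goodU W = (\<exists>a\<in>W. \<exists>b\<in>W. \<exists>c\<in>W. distinct [a,b,c] \<and> ok3 a b c)"
definition goodE :: "v4 set \<Rightarrow> bool" where
 "goodE W = ((\<exists>a\<in>W. \<exists>b\<in>W. \<exists>c\<in>W. distinct [a,b,c] \<and> xv a b = c) \<or>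
     (\<exists>a\<in>W. \<exists>b\<in>W. \<exists>e\<in>W. \<exists>c\<in>W. distinct [a,b,e,c] \<and> xv a (xv b e) = c))"

lemma srchU: "srch ngU [] cands 8" by code_simp
lemma srchE: "srch ngE [] cands 8" by code_simp

lemma ngU_ok: "\<forall>xs c. distinct xs \<longrightarrow> c \<notin> set xs \<longrightarrow> ngU xs c \<longrightarrow> goodU (insert c (set xs))"
proof (intro allI impI)
  fix xs c assume d: "distinct xs" and c: "c \<notin> set xs" and n: "ngU xs c"
  then obtain a b where ab: "(a,b) \<in> set (pairs xs)" "ok3 a b c" by (auto simp: ngU_def list_ex_iff)
  from pairs_mem[OF ab(1) d] c ab(2) show "goodU (insert c (set xs))"
    unfolding goodU_def by (intro bexI[of _ a] bexI[of _ b] bexI[of _ c]) auto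
qed

lemma ngE_ok: "\<forall>xs c. distinct xs \<longrightarrow> c \<notin> set xs \<longrightarrow> ngE xs c \<longrightarrow> goodE (insert c (set xs))"
proof (intro allI impI)
  fix xs c assume d: "distinct xs" and c: "c \<notin> set xs" and n: "ngE xs c"
  show "goodE (insert c (set xs))"
  proof (cases "list_ex (\<lambda>(a,b). xv a b = c) (pairs xs)")
    case True
    then obtain a b where ab: "(a,b) \<in> set (pairs xs)" "xv a b = c" by (auto simp: list_ex_iff)
    from pairs_mem[OF ab(1) d] c ab(2) show ?thesis
      unfolding goodE_def by (intro disjI1 bexI[of _ a] bexI[of _ b] bexI[of _ c]) auto
  next
    case False
    then obtain a b e where ab: "(a,b,e) \<in> set (triples xs)" "xv a (xv b e) = c"
      using n by (auto simp: ngE_def list_ex_iff)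
    from triples_mem[OF ab(1) d] c ab(2) show ?thesis
      unfolding goodE_def by (intro disjI2 bexI[of _ a] bexI[of _ b] bexI[of _ e] bexI[of _ c]) auto
  qed
qed

lemma cands_props: "distinct cands" "set [] \<inter> set cands = {}" by (simp_all add: cands_def)

lemma goodU_8: "Y \<subseteq> set cands \<Longrightarrow> card Y = 8 \<Longrightarrow> goodU Y"
  using srch_sound[of goodU ngU "[]" cands 8 Y] srchU ngU_ok cands_props
  unfolding goodU_def by (auto; blast)

lemma goodE_8: "Y \<subseteq> set cands \<Longrightarrow> card Y = 8 \<Longrightarrow> goodE Y"
  using srch_sound[of goodE ngE "[]" cands 8 Y] srchE ngE_ok cands_props
  unfolding goodE_def by (auto; blast)


definition vec :: "(nat \<Rightarrow> nat \<Rightarrow> bool) \<Rightarrow> nat \<Rightarrow> v4" where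
 "vec A j = (A 0 j, A 1 j, A 2 j, A 3 j)"

lemma less4: "(i::nat) < 4 \<Longrightarrow> i = 0 \<or> i = 1 \<or> i = 2 \<or> i = 3" by arith
lemma all4: "(\<forall>i<(4::nat). P i) \<longleftrightarrow> P 0 \<and> P 1 \<and> P 2 \<and> P 3"
  using less4 by auto

lemma in_cands: "v \<in> set cands" if "v \<noteq> (False,False,False,False)"
proof -
  obtain a b c d where v: "v = (a,b,c,d)" by (cases v) auto
  show ?thesis using that unfolding v
    by (cases a; cases b; cases c; cases d) (simp_all add: cands_def)
qed

lemma colsum1: "colsum A {j} i = of_bool (A i j)" by (simp add: colsum_def)
lemma colsum2: "j \<noteq> k \<Longrightarrow> colsum A {j,k} i = of_bool (A i j) + of_bool (A i k)" by (simp add: colsum_def)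
lemma colsum3: "distinct [j,k,l] \<Longrightarrow> colsum A {j,k,l} i = of_bool (A i j) + of_bool (A i k) + of_bool (A i l)"
  by (simp add: colsum_def)
lemma colsum4: "distinct [j,k,l,m] \<Longrightarrow> colsum A {j,k,l,m} i = of_bool (A i j) + of_bool (A i k) + of_bool (A i l) + of_bool (A i m)"
  by (simp add: colsum_def)

lemma even3: "r = (p \<noteq> q) \<Longrightarrow> even (of_bool p + of_bool q + of_bool r :: nat)"
  by (cases p; cases q) auto
lemma even4: "m = (p \<noteq> (q \<noteq> r)) \<Longrightarrow> even (of_bool p + of_bool q + of_bool r + of_bool m :: nat)"
  by (cases p; cases q; cases r) auto
lemma nx1_ok: "nx1 p q r \<Longrightarrow> of_bool p + of_bool q + of_bool r \<noteq> (1::nat)"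
  by (cases p; cases q; cases r) (auto simp: nx1_def)

lemma even_imp_one_free: "even_set m A S \<Longrightarrow> one_free m A S"
  unfolding even_set_def one_free_def by (metis odd_one)

lemma triv_cases:
  assumes "\<not> ((\<exists>j<8. vec A j = (False,False,False,False)) \<or> (\<exists>j<8. \<exists>k<8. j \<noteq> k \<and> vec A j = vec A k))"
  shows "inj_on (vec A) {..<8}" "vec A ` {..<8} \<subseteq> set cands" "card (vec A ` {..<8}) = 8"
proof -
  show i: "inj_on (vec A) {..<8}" using assms unfolding inj_on_def by auto
  have "\<forall>j<8. vec A j \<in> set cands" using assms in_cands by blast
  then show "vec A ` {..<8} \<subseteq> set cands" by auto
  show "card (vec A ` {..<8}) = 8" using card_image[OF i] by simp
qed

lemma zero_case: "vec A j = (False,False,False,False) \<Longrightarrow> even_set 4 A {j}"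
  unfolding even_set_def all4 colsum1 by (simp add: vec_def)
lemma dup_case: "j \<noteq> k \<Longrightarrow> vec A j = vec A k \<Longrightarrow> even_set 4 A {j,k}"
  unfolding even_set_def all4 using colsum2[of j k A] by (simp add: vec_def)

lemma exE: "\<exists>S. S \<subseteq> {..<8} \<and> S \<noteq> {} \<and> card S \<le> 4 \<and> even_set 4 A S"
proof (cases "(\<exists>j<8. vec A j = (False,False,False,False)) \<or> (\<exists>j<8. \<exists>k<8. j \<noteq> k \<and> vec A j = vec A k)")
  case True
  then show ?thesis
  proof
    assume "\<exists>j<8. vec A j = (False,False,False,False)"
    then obtain j where "j<8" "vec A j = (False,False,False,False)" by blast
    then show ?thesis using zero_case by (intro exI[of _ "{j}"]) auto
  next
    assume "\<exists>j<8. \<exists>k<8. j \<noteq> k \<and> vec A j = vec A k"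
    then obtain j k where "j<8" "k<8" "j\<noteq>k" "vec A j = vec A k" by blast
    then show ?thesis using dup_case[of j k A] by (intro exI[of _ "{j,k}"]) auto
  qed
next
  case False
  note tc = triv_cases[OF False]
  have "goodE (vec A ` {..<8})" using goodE_8 tc by blast
  then show ?thesis unfolding goodE_def
  proof (elim disjE bexE imageE conjE)
    fix a b c j k l assume h: "distinct [a,b,c]" "xv a b = c" "c = vec A l" "l \<in> {..<8}"
      "b = vec A k" "k \<in> {..<8}" "a = vec A j" "j \<in> {..<8}"
    then have d: "distinct [j,k,l]" by auto
    have r: "A 0 l = (A 0 j \<noteq> A 0 k)" "A 1 l = (A 1 j \<noteq> A 1 k)" "A 2 l = (A 2 j \<noteq> A 2 k)" "A 3 l = (A 3 j \<noteq> A 3 k)"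
      using h(2) unfolding h(3,5,7) vec_def by simp_all
    have "even_set 4 A {j,k,l}" unfolding even_set_def all4 colsum3[OF d]
      using r by (intro conjI even3) 
    moreover have "card {j,k,l} = 3" using d by simp
    ultimately show ?thesis using h(4,6,8) by (intro exI[of _ "{j,k,l}"]) auto
  next
    fix a b e c j k l m assume h: "distinct [a,b,e,c]" "xv a (xv b e) = c" "c = vec A m" "m \<in> {..<8}"
      "e = vec A l" "l \<in> {..<8}" "b = vec A k" "k \<in> {..<8}" "a = vec A j" "j \<in> {..<8}"
    then have d: "distinct [j,k,l,m]" by auto
    have r: "A 0 m = (A 0 j \<noteq> (A 0 k \<noteq> A 0 l))" "A 1 m = (A 1 j \<noteq> (A 1 k \<noteq> A 1 l))"
      "A 2 m = (A 2 j \<noteq> (A 2 k \<noteq> A 2 l))" "A 3 m = (A 3 j \<noteq> (A 3 k \<noteq> A 3 l))"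
      using h(2) unfolding h(3,5,7,9) vec_def by simp_all
    have "even_set 4 A {j,k,l,m}" unfolding even_set_def all4 colsum4[OF d]
      using r by (intro conjI even4)
    moreover have "card {j,k,l,m} = 4" using d by simp
    ultimately show ?thesis using h(4,6,8,10) by (intro exI[of _ "{j,k,l,m}"]) auto
  qed
qed

lemma exU: "\<exists>S. S \<subseteq> {..<8} \<and> S \<noteq> {} \<and> card S \<le> 3 \<and> one_free 4 A S"
proof (cases "(\<exists>j<8. vec A j = (False,False,False,False)) \<or> (\<exists>j<8. \<exists>k<8. j \<noteq> k \<and> vec A j = vec A k)")
  case True
  then show ?thesis
  proof
    assume "\<exists>j<8. vec A j = (False,False,False,False)"
    then obtain j where "j<8" "vec A j = (False,False,False,False)" by blast
    then show ?thesis using zero_case even_imp_one_free by (intro exI[of _ "{j}"]) auto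
  next
    assume "\<exists>j<8. \<exists>k<8. j \<noteq> k \<and> vec A j = vec A k"
    then obtain j k where "j<8" "k<8" "j\<noteq>k" "vec A j = vec A k" by blast
    then show ?thesis using dup_case[of j k A] even_imp_one_free by (intro exI[of _ "{j,k}"]) auto
  qed
next
  case False
  note tc = triv_cases[OF False]
  have "goodU (vec A ` {..<8})" using goodU_8 tc by blast
  then obtain a b c where abc: "a \<in> vec A ` {..<8}" "b \<in> vec A ` {..<8}" "c \<in> vec A ` {..<8}"
    "distinct [a,b,c]" "ok3 a b c" unfolding goodU_def by blast
  obtain j where j: "j < 8" "a = vec A j" using abc(1) by blast
  obtain k where k: "k < 8" "b = vec A k" using abc(2) by blast
  obtain l where l: "l < 8" "c = vec A l" using abc(3) by blast
  have d: "distinct [j,k,l]" using abc(4) j k l by auto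
  have r: "nx1 (A 0 j) (A 0 k) (A 0 l)" "nx1 (A 1 j) (A 1 k) (A 1 l)" "nx1 (A 2 j) (A 2 k) (A 2 l)" "nx1 (A 3 j) (A 3 k) (A 3 l)"
    using abc(5) unfolding j(2) k(2) l(2) vec_def by simp_all
  have "one_free 4 A {j,k,l}" unfolding one_free_def all4 colsum3[OF d]
    using r nx1_ok by blast
  moreover have "card {j,k,l} = 3" using d by simp
  moreover have "{j,k,l} \<subseteq> {..<8}" using j k l by simp
  ultimately show ?thesis by (intro exI[of _ "{j,k,l}"]) simp
qed


definition A0 :: "nat \<Rightarrow> nat \<Rightarrow> bool" where
 "A0 i j = (if j < 4 then i = j else i + 4 \<noteq> j)"

lemma less8: "(j::nat) < 8 \<Longrightarrow> j = 0 \<or> j = 1 \<or> j = 2 \<or> j = 3 \<or> j = 4 \<or> j = 5 \<or> j = 6 \<or> j = 7" by arith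

lemma A0_1: "j < 8 \<Longrightarrow> \<not> one_free 4 A0 {j}"
  unfolding one_free_def all4 colsum1 using less8[of j] by (auto simp: A0_def)

lemma A0_2: "j < 8 \<Longrightarrow> k < 8 \<Longrightarrow> j \<noteq> k \<Longrightarrow> \<not> one_free 4 A0 {j,k}"
  unfolding one_free_def all4 colsum2 using less8[of j] less8[of k] by (auto simp: A0_def)

definition w0 :: "nat \<Rightarrow> nat" where
 "w0 j = of_bool (A0 0 j) + of_bool (A0 1 j) + of_bool (A0 2 j) + of_bool (A0 3 j)"

lemma w0_odd: "j < 8 \<Longrightarrow> odd (w0 j)"
  using less8[of j] by (auto simp: w0_def A0_def)

lemma A0_3: assumes "distinct [j,k,l]" "j < 8" "k < 8" "l < 8" shows "\<not> even_set 4 A0 {j,k,l}"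
proof
  assume "even_set 4 A0 {j,k,l}"
  then have e: "even (colsum A0 {j,k,l} 0)" "even (colsum A0 {j,k,l} 1)" "even (colsum A0 {j,k,l} 2)" "even (colsum A0 {j,k,l} 3)"
    unfolding even_set_def all4 by auto
  have h1: "even (colsum A0 {j,k,l} 0 + colsum A0 {j,k,l} 1 + colsum A0 {j,k,l} 2 + colsum A0 {j,k,l} 3)"
    using e by simp
  have h2: "colsum A0 {j,k,l} 0 + colsum A0 {j,k,l} 1 + colsum A0 {j,k,l} 2 + colsum A0 {j,k,l} 3
     = w0 j + w0 k + w0 l" unfolding colsum3[OF assms(1)] w0_def by simp
  have "odd (w0 j + w0 k + w0 l)" using w0_odd assms(2-4) by simp
  then show False using h1 unfolding h2 by simp
qed

lemma lbU: assumes "S \<subseteq> {..<8}" "S \<noteq> {}" "one_free 4 A0 S" shows "3 \<le> card S"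
proof (rule ccontr)
  assume "\<not> 3 \<le> card S"
  moreover have "finite S" using assms(1) finite_subset by blast
  ultimately have "card S = 1 \<or> card S = 2" using assms(2) by (cases "card S") auto
  then show False
  proof
    assume "card S = 1"
    then obtain j where "S = {j}" by (rule card_1_singletonE)
    then show False using A0_1[of j] assms by auto
  next
    assume "card S = 2"
    then obtain j k where "S = {j,k}" "j \<noteq> k" unfolding card_2_iff by blast
    then show False using A0_2[of j k] assms by auto
  qed
qed

lemma lbE: assumes "S \<subseteq> {..<8}" "S \<noteq> {}" "even_set 4 A0 S" shows "4 \<le> card S"
proof (rule ccontr)
  assume "\<not> 4 \<le> card S"
  moreover have "3 \<le> card S" using lbU assms even_imp_one_free by blast
  ultimately have "card S = 3" by simp
  then obtain j k l where "S = {j,k,l}" "j \<noteq> k" "k \<noteq> l" "j \<noteq> l" unfolding card_3_iff by blast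
  then show False using A0_3[of j k l] assms by auto
qed

lemma fin_cards: "finite {card S | S. S \<subseteq> {..<(8::nat)} \<and> P S}"
proof -
  have "{card S | S. S \<subseteq> {..<(8::nat)} \<and> P S} \<subseteq> {..8}"
    using card_mono[of "{..<(8::nat)}"] by fastforce
  then show ?thesis using finite_subset by blast
qed

lemma u_le: "u_mat 4 8 A \<le> 3"
proof -
  obtain S where S: "S \<subseteq> {..<8}" "S \<noteq> {}" "card S \<le> 3" "one_free 4 A S" using exU by blast
  have "card S \<in> {card S | S. S \<subseteq> {..<8} \<and> S \<noteq> {} \<and> one_free 4 A S}" using S by blast
  then have "u_mat 4 8 A \<le> card S" unfolding u_mat_def by (rule Min_le[OF fin_cards[of "\<lambda>S. S \<noteq> {} \<and> one_free 4 A S"]])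
  then show ?thesis using S by simp
qed

lemma e_le: "eps_mat 4 8 A \<le> 4"
proof -
  obtain S where S: "S \<subseteq> {..<8}" "S \<noteq> {}" "card S \<le> 4" "even_set 4 A S" using exE by blast
  have "card S \<in> {card S | S. S \<subseteq> {..<8} \<and> S \<noteq> {} \<and> even_set 4 A S}" using S by blast
  then have "eps_mat 4 8 A \<le> card S" unfolding eps_mat_def by (rule Min_le[OF fin_cards[of "\<lambda>S. S \<noteq> {} \<and> even_set 4 A S"]])
  then show ?thesis using S by simp
qed

lemma u_A0: "3 \<le> u_mat 4 8 A0"
proof -
  let ?M = "{card S | S. S \<subseteq> {..<8} \<and> S \<noteq> {} \<and> one_free 4 A0 S}"
  have ne: "?M \<noteq> {}" using exU[of A0] by blast
  have "\<forall>x\<in>?M. 3 \<le> x" using lbU by blast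
  then show ?thesis unfolding u_mat_def using Min_ge_iff[OF fin_cards[of "\<lambda>S. S \<noteq> {} \<and> one_free 4 A0 S"] ne] by simp
qed

lemma e_A0: "4 \<le> eps_mat 4 8 A0"
proof -
  let ?M = "{card S | S. S \<subseteq> {..<8} \<and> S \<noteq> {} \<and> even_set 4 A0 S}"
  have ne: "?M \<noteq> {}" using exE[of A0] by blast
  have "\<forall>x\<in>?M. 4 \<le> x" using lbE by blast
  then show ?thesis unfolding eps_mat_def using Min_ge_iff[OF fin_cards[of "\<lambda>S. S \<noteq> {} \<and> even_set 4 A0 S"] ne] by simp
qed

theorem theorem7p1:
  shows "u_max 4 8 = 3 \<and> eps_max 4 8 = 4"
proof
  let ?N = "{u_mat 4 8 A | A. True}"
  have sub: "?N \<subseteq> {..3}" using u_le by auto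
  have fin: "finite ?N" using finite_subset[OF sub] by simp
  have ne: "?N \<noteq> {}" by blast
  have "Max ?N \<le> 3" using Max_le_iff[OF fin ne] sub by auto
  moreover have "u_mat 4 8 A0 \<le> Max ?N" using Max_ge[OF fin] by blast
  ultimately show "u_max 4 8 = 3" unfolding u_max_def using u_A0 by linarith
next
  let ?N = "{eps_mat 4 8 A | A. True}"
  have sub: "?N \<subseteq> {..4}" using e_le by auto
  have fin: "finite ?N" using finite_subset[OF sub] by simp
  have ne: "?N \<noteq> {}" by blast
  have "Max ?N \<le> 4" using Max_le_iff[OF fin ne] sub by auto
  moreover have "eps_mat 4 8 A0 \<le> Max ?N" using Max_ge[OF fin] by blast
  ultimately show "eps_max 4 8 = 4" unfolding eps_max_def using e_A0 by linarith
qed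

end
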